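(* Let $p$ be a prime, $n\ge2$, $m_1,\dots,m_n\ge2$, and $\ell_k,r_k\in\mathbb{Z}_p$. Let $\mathbb{E}$ be the splitting field over $\mathbb{Z}_p$ of the polynomials $g_{m_k;\ell_k,r_k}$ mod $p$, $1\le k\le n$. For each $k$ let $U_k\in GL_{m_k}(\mathbb{E})$ be such that $J_k:=U_k^{-1}S_{m_k}(\ell_k,r_k)U_k$ is a canonical (upper triangular) Jordan form over $\mathbb{E}$, and put $U_{T_n}=U_n\otimes U_{n-1}\otimes\cdots\otimes U_1$. Then $U_{T_n}$ is invertible and $$ U_{T_n}^{-1}T_nU_{T_n}=\widetilde J_n,\qquad\text{where }\widetilde J_1=J_1,\ \widetilde J_k=I_{m_k}\otimes\widetilde J_{k-1}+J_k\otimes I_{m_1\cdots m_{k-1}}\ (2\le k\le n), $$ which is an upper triangular (generalized Jordan) matrix. Moreover, $\widetilde J_n$ is a canonical Jordan form if and only if $S_{m_k}(\ell_k,r_k)$ is diagonalizable over $\mathbb{E}$ for every $k\ge2$, and $T_n$ is diagonalizable over $\mathbb{E}$ if and only if $S_{m_k}(\ell_k,r_k)$ is diagonalizable over $\mathbb{E}$ for every $1\le k\le n$.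
   Context: For $k\ge1$ and $t_1,t_2\in\mathbb{Z}_p$, $S_k(t_1,t_2)$ is the $k\times k$ tridiagonal matrix with zeros on the main diagonal, every subdiagonal entry (positions $(i+1,i)$) equal to $t_1$, and every superdiagonal entry (positions $(i,i+1)$) equal to $t_2$. $I_r$ is the $r\times r$ identity, $\otimes$ the Kronecker product. $T_1=S_{m_1}(\ell_1,r_1)$ and $T_k=I_{m_k}\otimes T_{k-1}+S_{m_k}(\ell_k,r_k)\otimes I_{m_1\cdots m_{k-1}}$ for $2\le k\le n$. For $j\ge0$, $g_{j;t_1,t_2}(x)=\sum_{i=0}^{\lfloor j/2\rfloor}(-1)^i(t_1t_2)^i\binom{j-i}{i}x^{j-2i}$ (the characteristic polynomial of $S_j(t_1,t_2)$). A canonical Jordan form is a block diagonal matrix of Jordan blocks, each having a single eigenvalue on its diagonal, $1$'s on its superdiagonal and zeros elsewhere. *)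

theory Defs
  imports "Jordan_Normal_Form.Jordan_Normal_Form"
          "Jordan_Normal_Form.Gauss_Jordan_Elimination"
          "HOL-Computational_Algebra.Polynomial"
          "HOL-Computational_Algebra.Primes"
begin

definition kron :: "'a::semiring_1 mat \<Rightarrow> 'a mat \<Rightarrow> 'a mat" where
  "kron A B = mat (dim_row A * dim_row B) (dim_col A * dim_col B)
     (\<lambda>(i,j). A $$ (i div dim_row B, j div dim_col B) * B $$ (i mod dim_row B, j mod dim_col B))"

text \<open>Matrix inverse (meaningful for invertible square matrices).\<close>
definition minv :: "'a::field mat \<Rightarrow> 'a mat" where
  "minv A = the (mat_inverse A)"

definition Smat :: "nat \<Rightarrow> 'a::semiring_1 \<Rightarrow> 'a \<Rightarrow> 'a mat" where
  "Smat k t1 t2 = mat k k (\<lambda>(i,j). if i = j + 1 then t1 else if j = i + 1 then t2 else 0)"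

fun ksum :: "(nat \<Rightarrow> 'a::semiring_1 mat) \<Rightarrow> (nat \<Rightarrow> nat) \<Rightarrow> nat \<Rightarrow> 'a mat" where
  "ksum A m 0 = 1\<^sub>m 1"
| "ksum A m (Suc 0) = A 1"
| "ksum A m (Suc (Suc k)) =
     kron (1\<^sub>m (m (Suc (Suc k)))) (ksum A m (Suc k))
     + kron (A (Suc (Suc k))) (1\<^sub>m (\<Prod>i\<in>{1..Suc k}. m i))"

fun kprod :: "(nat \<Rightarrow> 'a::semiring_1 mat) \<Rightarrow> nat \<Rightarrow> 'a mat" where
  "kprod U 0 = 1\<^sub>m 1"
| "kprod U (Suc 0) = U 1"
| "kprod U (Suc (Suc k)) = kron (U (Suc (Suc k))) (kprod U (Suc k))"

definition gpoly :: "nat \<Rightarrow> 'a::comm_ring_1 \<Rightarrow> 'a \<Rightarrow> 'a poly" where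
  "gpoly j t1 t2 = (\<Sum>i = 0..j div 2.
       monom ((-1)^i * (t1 * t2)^i * of_nat ((j - i) choose i)) (j - 2 * i))"

definition splits :: "'a::field poly \<Rightarrow> bool" where
  "splits f \<longleftrightarrow> (\<exists>c as. f = Polynomial.smult c (\<Prod>a\<leftarrow>as. [:- a, 1:]))"

definition gen_subfield :: "'a::field set \<Rightarrow> 'a set" where
  "gen_subfield S = \<Inter> {F. S \<subseteq> F \<and> 0 \<in> F \<and> 1 \<in> F
      \<and> (\<forall>x\<in>F. \<forall>y\<in>F. x + y \<in> F \<and> x * y \<in> F)
      \<and> (\<forall>x\<in>F. - x \<in> F \<and> inverse x \<in> F)}"

text \<open>The field type 'a is a splitting field of the family of polynomials fs over its prime field.\<close>
definition is_splitting_field :: "'a::field poly set \<Rightarrow> bool" where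
  "is_splitting_field fs \<longleftrightarrow> (\<forall>f\<in>fs. splits f)
      \<and> gen_subfield {x. \<exists>f\<in>fs. poly f x = 0} = UNIV"

definition diagonalizable :: "'a::field mat \<Rightarrow> bool" where
  "diagonalizable A \<longleftrightarrow> (\<exists>D. diagonal_mat D \<and> similar_mat A D)"

definition canonical_jordan :: "'a::{zero,one} mat \<Rightarrow> bool" where
  "canonical_jordan J \<longleftrightarrow> (\<exists>n_as. J = jordan_matrix n_as)"

end

theory Submission
  imports Defs "Jordan_Normal_Form.Jordan_Normal_Form_Uniqueness"
begin


lemma minv_props:
  fixes A :: "'a::field mat"
  assumes A: "A \<in> carrier_mat n n" and inv: "invertible_mat A"
  shows "A * minv A = 1\<^sub>m n \<and> minv A * A = 1\<^sub>m n \<and> minv A \<in> carrier_mat n n"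
proof (cases "mat_inverse A")
  case None
  from inv obtain B where AB: "A * B = 1\<^sub>m n" and BA: "B * A = 1\<^sub>m (dim_row B)"
    unfolding invertible_mat_def inverts_mat_def using A by auto
  have Bc: "B \<in> carrier_mat n n" using AB BA A
    by (metis carrier_matD(1) carrier_matD(2) carrier_matI index_mult_mat(2) index_mult_mat(3) index_one_mat(2) index_one_mat(3))
  have "A \<in> Units (ring_mat TYPE('a) n ())"
    unfolding Units_def ring_mat_def using A Bc AB BA by auto
  with mat_inverse(1)[OF A None, where b = "()"] show ?thesis by blast
next
  case (Some B)
  from mat_inverse(2)[OF A Some] show ?thesis unfolding minv_def Some by auto
qed

lemma inverse_unique:
  fixes A :: "'a::field mat"
  assumes "A \<in> carrier_mat n n" "B \<in> carrier_mat n n" "C \<in> carrier_mat n n"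
   "B * A = 1\<^sub>m n" "A * C = 1\<^sub>m n"
  shows "B = C"
proof -
  have "B = B * (A * C)" using assms by simp
  also have "\<dots> = (B * A) * C" using assms by (metis assoc_mult_mat)
  also have "\<dots> = C" using assms by simp
  finally show ?thesis .
qed

lemma minv_eq:
  fixes A :: "'a::field mat"
  assumes A: "A \<in> carrier_mat n n" and B: "B \<in> carrier_mat n n"
   and "A * B = 1\<^sub>m n" "B * A = 1\<^sub>m n"
  shows "minv A = B" "invertible_mat A"
proof -
  show inv: "invertible_mat A" unfolding invertible_mat_def inverts_mat_def using assms by auto
  from minv_props[OF A inv] show "minv A = B"
    using inverse_unique[OF A _ B, of "minv A"] assms by auto
qed

lemma sum_div_mod:
  fixes g :: "nat \<Rightarrow> nat \<Rightarrow> 'a::comm_monoid_add"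
  shows "(\<Sum>t<a*b. g (t div b) (t mod b)) = (\<Sum>u<a. \<Sum>v<b. g u v)"
proof -
  have "(\<Sum>t<a*b. g (t div b) (t mod b)) = (\<Sum>(u,v)\<in>{..<a}\<times>{..<b}. g u v)"
  proof (rule sum.reindex_bij_witness[where i = "\<lambda>(u,v). u*b+v" and j = "\<lambda>t. (t div b, t mod b)"])
    fix t assume "t \<in> {..<a*b}"
    then show "(t div b, t mod b) \<in> {..<a}\<times>{..<b}"
      by (auto simp: less_mult_imp_div_less) (metis mod_less_divisor mult_zero_right not_less_zero zero_less_iff_neq_zero)
  next
    fix uv assume "uv \<in> {..<a}\<times>{..<b}"
    then obtain u v where uv: "uv = (u,v)" "u < a" "v < b" by auto
    have "u*b+v < a*b"
    proof -
      have "u*b + v < u*b + b" using uv by simp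
      also have "\<dots> = Suc u * b" by simp
      also have "\<dots> \<le> a * b" using uv by (intro mult_le_mono1) simp
      finally show ?thesis .
    qed
    then show "(case uv of (u, v) \<Rightarrow> u * b + v) \<in> {..<a*b}" using uv by simp
    show "((case uv of (u, v) \<Rightarrow> u * b + v) div b, (case uv of (u, v) \<Rightarrow> u * b + v) mod b) = uv"
      using uv by auto
  qed auto
  also have "\<dots> = (\<Sum>u<a. \<Sum>v<b. g u v)" by (simp add: sum.cartesian_product)
  finally show ?thesis .
qed

lemma kron_dim[simp]: "dim_row (kron A B) = dim_row A * dim_row B" "dim_col (kron A B) = dim_col A * dim_col B"
  unfolding kron_def by auto

lemma kron_carrier: "A \<in> carrier_mat a b \<Longrightarrow> B \<in> carrier_mat c d \<Longrightarrow> kron A B \<in> carrier_mat (a*c) (b*d)"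
  by (intro carrier_matI) (simp_all add: carrier_matD)

lemma index_kron: "i < dim_row A * dim_row B \<Longrightarrow> j < dim_col A * dim_col B \<Longrightarrow>
  kron A B $$ (i,j) = A $$ (i div dim_row B, j div dim_col B) * B $$ (i mod dim_row B, j mod dim_col B)"
  unfolding kron_def by auto

lemma div_lt: "i < a * (c::nat) \<Longrightarrow> i div c < a"
  by (simp add: less_mult_imp_div_less)

lemma mod_lt: "i < a * (c::nat) \<Longrightarrow> i mod c < c"
  by (metis mod_less_divisor mult_zero_right not_less_zero zero_less_iff_neq_zero)

lemma kron_mult:
  fixes A :: "'a::comm_semiring_1 mat"
  assumes A: "A \<in> carrier_mat a b" and B: "B \<in> carrier_mat c d"
    and C: "C \<in> carrier_mat b e" and D: "D \<in> carrier_mat d f"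
  shows "kron A B * kron C D = kron (A*C) (B*D)"
proof (rule eq_matI)
  fix i j assume i: "i < dim_row (kron (A*C) (B*D))" and j: "j < dim_col (kron (A*C) (B*D))"
  have i': "i < a * c" and j': "j < e * f" using i j A B C D by (simp_all add: carrier_matD)
  have "(kron A B * kron C D) $$ (i,j) = (\<Sum>t<b*d. kron A B $$ (i,t) * kron C D $$ (t,j))"
    using i' j' A B C D by (simp add: scalar_prod_def atLeast0LessThan)
  also have "\<dots> = (\<Sum>t<b*d. (\<lambda>u v. (A $$ (i div c, u) * C $$ (u, j div f)) * (B $$ (i mod c, v) * D $$ (v, j mod f))) (t div d) (t mod d))"
    by (rule sum.cong[OF refl], insert A B C D i' j', auto simp: index_kron ac_simps)
  also have "\<dots> = (\<Sum>u<b. \<Sum>v<d. (A $$ (i div c, u) * C $$ (u, j div f)) * (B $$ (i mod c, v) * D $$ (v, j mod f)))"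
    by (rule sum_div_mod)
  also have "\<dots> = (\<Sum>u<b. A $$ (i div c, u) * C $$ (u, j div f)) * (\<Sum>v<d. B $$ (i mod c, v) * D $$ (v, j mod f))"
    by (simp add: sum_product)
  also have "\<dots> = kron (A*C) (B*D) $$ (i,j)"
    using i' j' A B C D div_lt[OF i'] mod_lt[OF i'] div_lt[OF j'] mod_lt[OF j']
    by (simp add: index_kron scalar_prod_def atLeast0LessThan)
  finally show "(kron A B * kron C D) $$ (i,j) = kron (A*C) (B*D) $$ (i,j)" .
next
  show "dim_row (kron A B * kron C D) = dim_row (kron (A*C) (B*D))" using A B C D by (simp add: carrier_matD)
  show "dim_col (kron A B * kron C D) = dim_col (kron (A*C) (B*D))" using A B C D by (simp add: carrier_matD)
qed

lemma kron_add_left: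
  assumes A: "A \<in> carrier_mat a b" and A': "A' \<in> carrier_mat a b" and B: "B \<in> carrier_mat c d"
  shows "kron (A + A') B = kron A B + kron A' B"
proof (rule eq_matI)
  fix i j assume "i < dim_row (kron A B + kron A' B)" "j < dim_col (kron A B + kron A' B)"
  then have i: "i < a*c" and j: "j < b*d" using A A' B by (simp_all add: carrier_matD)
  have dA: "dim_row A = a" "dim_col A = b" "dim_row A' = a" "dim_col A' = b" "dim_row B = c" "dim_col B = d"
    using A A' B by (simp_all add: carrier_matD)
  show "kron (A + A') B $$ (i, j) = (kron A B + kron A' B) $$ (i, j)"
    using i j div_lt[OF i] div_lt[OF j]
    by (simp add: index_kron dA distrib_right)
next
  show "dim_row (kron (A + A') B) = dim_row (kron A B + kron A' B)" using A A' B by (simp add: carrier_matD)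
  show "dim_col (kron (A + A') B) = dim_col (kron A B + kron A' B)" using A A' B by (simp add: carrier_matD)
qed

lemma kron_add_right:
  assumes A: "A \<in> carrier_mat a b" and B: "B \<in> carrier_mat c d" and B': "B' \<in> carrier_mat c d"
  shows "kron A (B + B') = kron A B + kron A B'"
proof (rule eq_matI)
  fix i j assume "i < dim_row (kron A B + kron A B')" "j < dim_col (kron A B + kron A B')"
  then have i: "i < a*c" and j: "j < b*d" using A B' B by (simp_all add: carrier_matD)
  have dA: "dim_row A = a" "dim_col A = b" "dim_row B' = c" "dim_col B' = d" "dim_row B = c" "dim_col B = d"
    using A B' B by (simp_all add: carrier_matD)
  show "kron A (B + B') $$ (i, j) = (kron A B + kron A B') $$ (i, j)"
    using i j mod_lt[OF i] mod_lt[OF j]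
    by (simp add: index_kron dA distrib_left)
next
  show "dim_row (kron A (B + B')) = dim_row (kron A B + kron A B')" using A B B' by (simp add: carrier_matD)
  show "dim_col (kron A (B + B')) = dim_col (kron A B + kron A B')" using A B B' by (simp add: carrier_matD)
qed

lemma div_mod_eq: "(i::nat) div c = j div c \<Longrightarrow> i mod c = j mod c \<Longrightarrow> i = j"
  by (metis div_mult_mod_eq)

lemma kron_one: "kron (1\<^sub>m a) (1\<^sub>m b) = (1\<^sub>m (a*b) :: 'a::semiring_1 mat)"
proof (rule eq_matI)
  fix i j assume "i < dim_row (1\<^sub>m (a*b) :: 'a mat)" "j < dim_col (1\<^sub>m (a*b) :: 'a mat)"
  then have i: "i < a*b" and j: "j < a*b" by auto
  have e: "kron (1\<^sub>m a) (1\<^sub>m b) $$ (i,j) = (1\<^sub>m a :: 'a mat) $$ (i div b, j div b) * (1\<^sub>m b :: 'a mat) $$ (i mod b, j mod b)"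
    using i j by (simp add: index_kron)
  show "kron (1\<^sub>m a) (1\<^sub>m b) $$ (i,j) = (1\<^sub>m (a*b) :: 'a mat) $$ (i,j)"
  proof (cases "i = j")
    case True
    then show ?thesis unfolding e using i j div_lt[OF i] mod_lt[OF i] by simp
  next
    case False
    then have "i div b \<noteq> j div b \<or> i mod b \<noteq> j mod b" using div_mod_eq by blast
    then show ?thesis unfolding e using False i j div_lt[OF i] mod_lt[OF i] div_lt[OF j] mod_lt[OF j]
      by (elim disjE) simp_all
  qed
next
  show "dim_row (kron (1\<^sub>m a) (1\<^sub>m b)) = dim_row (1\<^sub>m (a*b) :: 'a mat)" by simp
  show "dim_col (kron (1\<^sub>m a) (1\<^sub>m b)) = dim_col (1\<^sub>m (a*b) :: 'a mat)" by simp
qed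

definition ks2 :: "'a::semiring_1 mat \<Rightarrow> 'a mat \<Rightarrow> nat \<Rightarrow> nat \<Rightarrow> 'a mat" where
  "ks2 A B m M = kron (1\<^sub>m m) A + kron B (1\<^sub>m M)"

lemma ks2_carrier: "A \<in> carrier_mat M M \<Longrightarrow> B \<in> carrier_mat m m \<Longrightarrow> ks2 A B m M \<in> carrier_mat (m*M) (m*M)"
  unfolding ks2_def by (intro carrier_matI) (simp_all add: carrier_matD)

lemma ks2_index:
  assumes A: "A \<in> carrier_mat M M" and B: "B \<in> carrier_mat m m" and i: "i < m*M" and j: "j < m*M"
  shows "ks2 A B m M $$ (i,j) = (if i div M = j div M then A $$ (i mod M, j mod M) else 0)
     + B $$ (i div M, j div M) * (if i mod M = j mod M then 1 else 0)"
proof -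
  have d: "dim_row A = M" "dim_col A = M" "dim_row B = m" "dim_col B = m" using A B by (simp_all add: carrier_matD)
  show ?thesis unfolding ks2_def using i j div_lt[OF i] div_lt[OF j] mod_lt[OF i] mod_lt[OF j]
    by (simp add: index_kron d)
qed

definition D :: "(nat \<Rightarrow> nat) \<Rightarrow> nat \<Rightarrow> nat" where "D m k = (\<Prod>i\<in>{1..k}. m i)"

lemma D_Suc: "D m (Suc k) = m (Suc k) * D m k"
  unfolding D_def by (simp add: prod.cl_ivl_Suc)

lemma D_0: "D m 0 = 1" unfolding D_def by simp

lemma D_ge1: "\<forall>i\<in>{1..k}. m i \<ge> 2 \<Longrightarrow> D m k \<ge> 1"
proof (induction k)
  case 0 then show ?case by (simp add: D_0)
next
  case (Suc k)
  then have "m (Suc k) \<ge> 2" "D m k \<ge> 1" by auto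
  then show ?case unfolding D_Suc by (metis le_trans less_imp_le_nat mult_le_mono one_le_numeral one_less_numeral_iff semiring_norm(76) nat_mult_1)
qed

lemma D_ge2: "\<forall>i\<in>{1..k}. m i \<ge> 2 \<Longrightarrow> k \<ge> 1 \<Longrightarrow> D m k \<ge> 2"
proof -
  assume a: "\<forall>i\<in>{1..k}. m i \<ge> 2" and k: "k \<ge> 1"
  then obtain k' where k': "k = Suc k'" by (cases k) auto
  have "D m k' \<ge> 1" using D_ge1[of k' m] a k' by auto
  moreover have "m k \<ge> 2" using a k by auto
  ultimately show ?thesis unfolding k' D_Suc by (metis k' mult_le_mono nat_mult_1_right)
qed

lemma ksum_Suc: "k \<ge> 1 \<Longrightarrow> ksum X m (Suc k) = ks2 (ksum X m k) (X (Suc k)) (m (Suc k)) (D m k)"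
  by (cases k) (simp_all add: ks2_def D_def)

lemma kprod_Suc: "k \<ge> 1 \<Longrightarrow> kprod U (Suc k) = kron (U (Suc k)) (kprod U k)"
  by (cases k) simp_all

lemma ksum_carrier:
  assumes "k \<ge> 1" "\<forall>i\<in>{1..k}. X i \<in> carrier_mat (m i) (m i)"
  shows "ksum X m k \<in> carrier_mat (D m k) (D m k)"
  using assms
proof (induction k rule: nat_induct_at_least)
  case base
  then show ?case by (simp add: D_def)
next
  case (Suc k)
  then have "ksum X m k \<in> carrier_mat (D m k) (D m k)" "X (Suc k) \<in> carrier_mat (m (Suc k)) (m (Suc k))"
    by auto
  from ks2_carrier[OF this] show ?case unfolding ksum_Suc[OF Suc(1)] D_Suc .
qed

lemma kprod_carrier:
  assumes "k \<ge> 1" "\<forall>i\<in>{1..k}. X i \<in> carrier_mat (m i) (m i)"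
  shows "kprod X k \<in> carrier_mat (D m k) (D m k)"
  using assms
proof (induction k rule: nat_induct_at_least)
  case base
  then show ?case by (simp add: D_def)
next
  case (Suc k)
  then have "kprod X k \<in> carrier_mat (D m k) (D m k)" "X (Suc k) \<in> carrier_mat (m (Suc k)) (m (Suc k))"
    by auto
  from kron_carrier[OF this(2,1)] show ?case unfolding kprod_Suc[OF Suc(1)] D_Suc .
qed

lemma sim_main:
  fixes U V S :: "nat \<Rightarrow> 'a::field mat"
  assumes "k \<ge> 1"
    and "\<forall>i\<in>{1..k}. U i \<in> carrier_mat (m i) (m i) \<and> V i \<in> carrier_mat (m i) (m i)
          \<and> S i \<in> carrier_mat (m i) (m i) \<and> V i * U i = 1\<^sub>m (m i) \<and> U i * V i = 1\<^sub>m (m i)"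
  shows "kprod V k * kprod U k = 1\<^sub>m (D m k) \<and> kprod U k * kprod V k = 1\<^sub>m (D m k)
    \<and> kprod V k * ksum S m k * kprod U k = ksum (\<lambda>i. V i * S i * U i) m k"
  using assms
proof (induction k rule: nat_induct_at_least)
  case base
  then show ?case by (simp add: D_def)
next
  case (Suc k)
  let ?J = "\<lambda>i. V i * S i * U i"
  have a: "\<forall>i\<in>{1..k}. U i \<in> carrier_mat (m i) (m i) \<and> V i \<in> carrier_mat (m i) (m i)
          \<and> S i \<in> carrier_mat (m i) (m i) \<and> V i * U i = 1\<^sub>m (m i) \<and> U i * V i = 1\<^sub>m (m i)"
    using Suc(3) by auto
  from Suc(2)[OF a] have IH1: "kprod V k * kprod U k = 1\<^sub>m (D m k)"
    and IH2: "kprod U k * kprod V k = 1\<^sub>m (D m k)"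
    and IH3: "kprod V k * ksum S m k * kprod U k = ksum ?J m k" by auto
  define mm where "mm = m (Suc k)"
  define M where "M = D m k"
  define u where "u = U (Suc k)"
  define v where "v = V (Suc k)"
  define s where "s = S (Suc k)"
  define P where "P = kprod U k"
  define Q where "Q = kprod V k"
  define T where "T = ksum S m k"
  have u: "u \<in> carrier_mat mm mm" and v: "v \<in> carrier_mat mm mm" and s: "s \<in> carrier_mat mm mm"
    and vu: "v * u = 1\<^sub>m mm" and uv: "u * v = 1\<^sub>m mm"
    using Suc(3) unfolding u_def v_def s_def mm_def by auto
  have P: "P \<in> carrier_mat M M" unfolding P_def M_def using kprod_carrier[OF Suc(1)] a by blast
  have Q: "Q \<in> carrier_mat M M" unfolding Q_def M_def using kprod_carrier[OF Suc(1)] a by blast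
  have T: "T \<in> carrier_mat M M" unfolding T_def M_def using ksum_carrier[OF Suc(1)] a by blast
  have QP: "Q * P = 1\<^sub>m M" and PQ: "P * Q = 1\<^sub>m M" and QTP: "Q * T * P = ksum ?J m k"
    using IH1 IH2 IH3 unfolding P_def Q_def T_def M_def by auto
  have e1: "kprod V (Suc k) = kron v Q" unfolding kprod_Suc[OF Suc(1)] v_def Q_def ..
  have e2: "kprod U (Suc k) = kron u P" unfolding kprod_Suc[OF Suc(1)] u_def P_def ..
  have e3: "ksum S m (Suc k) = kron (1\<^sub>m mm) T + kron s (1\<^sub>m M)"
    unfolding ksum_Suc[OF Suc(1)] ks2_def mm_def T_def s_def M_def ..
  have e4: "ksum ?J m (Suc k) = kron (1\<^sub>m mm) (ksum ?J m k) + kron (v * s * u) (1\<^sub>m M)"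
    unfolding ksum_Suc[OF Suc(1)] ks2_def mm_def M_def v_def s_def u_def ..
  have DS: "D m (Suc k) = mm * M" unfolding D_Suc mm_def M_def ..
  have r1: "kron v Q * kron u P = 1\<^sub>m (D m (Suc k))"
    unfolding kron_mult[OF v Q u P] vu QP DS kron_one ..
  have r2: "kron u P * kron v Q = 1\<^sub>m (D m (Suc k))"
    unfolding kron_mult[OF u P v Q] uv PQ DS kron_one ..
  have I1: "1\<^sub>m mm \<in> carrier_mat mm mm" and I2: "1\<^sub>m M \<in> carrier_mat M M" by auto
  have c1: "kron (1\<^sub>m mm) T \<in> carrier_mat (mm*M) (mm*M)" by (rule kron_carrier[OF I1 T])
  have c2: "kron s (1\<^sub>m M) \<in> carrier_mat (mm*M) (mm*M)" by (rule kron_carrier[OF s I2])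
  have cQ: "kron v Q \<in> carrier_mat (mm*M) (mm*M)" by (rule kron_carrier[OF v Q])
  have cP: "kron u P \<in> carrier_mat (mm*M) (mm*M)" by (rule kron_carrier[OF u P])
  have vT: "v * 1\<^sub>m mm \<in> carrier_mat mm mm" "Q * T \<in> carrier_mat M M" "v * s \<in> carrier_mat mm mm"
    "Q * 1\<^sub>m M \<in> carrier_mat M M" using v Q T s by auto
  have "kron v Q * (kron (1\<^sub>m mm) T + kron s (1\<^sub>m M)) * kron u P
     = (kron v Q * kron (1\<^sub>m mm) T + kron v Q * kron s (1\<^sub>m M)) * kron u P"
    using mult_add_distrib_mat[OF cQ c1 c2] by simp
  also have "\<dots> = kron v Q * kron (1\<^sub>m mm) T * kron u P + kron v Q * kron s (1\<^sub>m M) * kron u P"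
    by (rule add_mult_distrib_mat[OF mult_carrier_mat[OF cQ c1] mult_carrier_mat[OF cQ c2] cP])
  also have "kron v Q * kron (1\<^sub>m mm) T * kron u P = kron (v * 1\<^sub>m mm * u) (Q * T * P)"
    unfolding kron_mult[OF v Q I1 T] kron_mult[OF vT(1,2) u P] ..
  also have "\<dots> = kron (1\<^sub>m mm) (ksum ?J m k)" using v vu QTP by simp
  also have "kron v Q * kron s (1\<^sub>m M) * kron u P = kron (v * s * u) (Q * 1\<^sub>m M * P)"
    unfolding kron_mult[OF v Q s I2] kron_mult[OF vT(3,4) u P] ..
  also have "Q * 1\<^sub>m M * P = 1\<^sub>m M" using Q P QP by simp
  finally have r3: "kprod V (Suc k) * ksum S m (Suc k) * kprod U (Suc k) = ksum ?J m (Suc k)"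
    unfolding e1 e2 e3 e4 .
  show ?case using r1 r2 r3 unfolding e1 e2 by simp
qed

definition jchar :: "'a::{zero,one} mat \<Rightarrow> bool" where
  "jchar J \<longleftrightarrow> (\<forall>i<dim_row J. \<forall>j<dim_row J. J $$ (i,j) \<noteq> 0 \<longrightarrow>
      j = i \<or> (j = Suc i \<and> J $$ (i,j) = 1 \<and> J $$ (i,i) = J $$ (j,j)))"

lemma jchar_D: "jchar J \<Longrightarrow> i < dim_row J \<Longrightarrow> j < dim_row J \<Longrightarrow> J $$ (i,j) \<noteq> 0 \<Longrightarrow>
      j = i \<or> (j = Suc i \<and> J $$ (i,j) = 1 \<and> J $$ (i,i) = J $$ (j,j))"
  unfolding jchar_def by blast

lemma jordan_jchar: "jchar (jordan_matrix n_as)"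
proof (induction n_as)
  case Nil
  then show ?case unfolding jchar_def by simp
next
  case (Cons ka n_as)
  obtain k a where ka: "ka = (k,a)" by (cases ka)
  define n' where "n' = sum_list (map fst n_as)"
  define JM where "JM = jordan_matrix n_as"
  have dJM: "dim_row JM = n'" "dim_col JM = n'" unfolding JM_def n'_def by simp_all
  have JC: "jordan_matrix (ka # n_as) = four_block_mat (jordan_block k a) (0\<^sub>m k n') (0\<^sub>m n' k) JM"
    unfolding ka jordan_matrix_Cons n'_def JM_def ..
  have dim: "dim_row (jordan_matrix (ka # n_as)) = k + n'" unfolding JC using dJM by simp
  have E: "jordan_matrix (ka # n_as) $$ (i,j) = (if i < k then if j < k then (if i = j then a else if Suc i = j then 1 else 0) else 0
      else if j < k then 0 else JM $$ (i-k, j-k))" if "i < k + n'" "j < k + n'" for i j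
    unfolding JC using that dJM by simp
  show ?case unfolding jchar_def dim
  proof (intro allI impI)
    fix i j assume i: "i < k + n'" and j: "j < k + n'" and nz: "jordan_matrix (ka # n_as) $$ (i, j) \<noteq> 0"
    note Ei = E[OF i j] E[OF i i] E[OF j j]
    show "j = i \<or> j = Suc i \<and> jordan_matrix (ka # n_as) $$ (i, j) = 1 \<and>
           jordan_matrix (ka # n_as) $$ (i, i) = jordan_matrix (ka # n_as) $$ (j, j)"
    proof (cases "i < k")
      case True
      show ?thesis
      proof (cases "j < k")
        case True
        then show ?thesis using nz \<open>i < k\<close> unfolding Ei by (auto split: if_splits)
      next
        case False
        then show ?thesis using nz \<open>i < k\<close> unfolding Ei by simp
      qed
    next
      case False
      show ?thesis
      proof (cases "j < k")
        case True
        then show ?thesis using nz \<open>\<not> i < k\<close> unfolding Ei by simp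
      next
        case jk: False
        have nz': "JM $$ (i-k, j-k) \<noteq> 0" using nz False jk unfolding Ei by simp
        have "i - k < dim_row JM" "j - k < dim_row JM" using i j False jk dJM by auto
        from jchar_D[OF Cons.IH[folded JM_def] this nz']
        have "j - k = i - k \<or> (j - k = Suc (i - k) \<and> JM $$ (i-k, j-k) = 1 \<and> JM $$ (i-k, i-k) = JM $$ (j-k, j-k))" .
        then show ?thesis using False jk unfolding Ei by auto
      qed
    qed
  qed
qed

lemma jchar_upper: "jchar J \<Longrightarrow> upper_triangular J"
  unfolding upper_triangular_def
proof (intro allI impI)
  fix i j assume J: "jchar J" and i: "i < dim_row J" and ji: "j < i"
  show "J $$ (i,j) = 0"
  proof (rule ccontr)
    assume "J $$ (i,j) \<noteq> 0"
    from jchar_D[OF J i _ this] ji i show False by auto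
  qed
qed

lemma jordan_matrix_Nil: "jordan_matrix [] = (0\<^sub>m 0 0 :: 'a::{zero,one} mat)"
  by (rule eq_matI) simp_all

lemma jchar_jordan:
  fixes J :: "'a::{zero,one} mat"
  shows "J \<in> carrier_mat n n \<Longrightarrow> jchar J \<Longrightarrow> \<exists>n_as. J = jordan_matrix n_as"
proof (induction n arbitrary: J rule: less_induct)
  case (less n)
  note Jc = less.prems(1) and Jj = less.prems(2)
  have dJ: "dim_row J = n" "dim_col J = n" using Jc by (simp_all add: carrier_matD)
  show ?case
  proof (cases "n = 0")
    case True
    then have "J = jordan_matrix []" unfolding jordan_matrix_Nil by (intro eq_matI) (simp_all add: dJ)
    then show ?thesis by blast
  next
    case False
    define P where "P = (\<lambda>k. 0 < k \<and> (k = n \<or> J $$ (k-1, k) = 0))"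
    have Pn: "P n" unfolding P_def using False by simp
    define k where "k = (LEAST k. P k)"
    have Pk: "P k" unfolding k_def by (rule LeastI[of P, OF Pn])
    have kn: "k \<le> n" unfolding k_def by (rule Least_le[of P, OF Pn])
    have k0: "0 < k" and kend: "k = n \<or> J $$ (k-1, k) = 0" using Pk unfolding P_def by auto
    have notP: "\<not> P i" if "i < k" for i using not_less_Least[OF that[unfolded k_def]] unfolding k_def .
    have sup1: "J $$ (i, Suc i) = 1 \<and> J $$ (i,i) = J $$ (Suc i, Suc i)" if "Suc i < k" for i
    proof -
      have "J $$ (i, Suc i) \<noteq> 0" using notP[OF that] that kn unfolding P_def by auto
      from jchar_D[OF Jj _ _ this] that kn dJ show ?thesis by auto
    qed
    define a where "a = J $$ (0,0)"
    have diag: "J $$ (i,i) = a" if "i < k" for i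
      using that
    proof (induction i)
      case 0 then show ?case unfolding a_def by simp
    next
      case (Suc i) then show ?case using sup1[of i] by simp
    qed
    define J' where "J' = mat (n-k) (n-k) (\<lambda>(i,j). J $$ (i+k, j+k))"
    have J'c: "J' \<in> carrier_mat (n-k) (n-k)" unfolding J'_def by simp
    have J'j: "jchar J'"
      unfolding jchar_def
    proof (intro allI impI)
      fix i j assume i: "i < dim_row J'" and j: "j < dim_row J'" and nz: "J' $$ (i,j) \<noteq> 0"
      have i': "i < n - k" and j': "j < n - k" using i j unfolding J'_def by auto
      have e: "J' $$ (i,j) = J $$ (i+k,j+k)" "J' $$ (i,i) = J $$ (i+k,i+k)" "J' $$ (j,j) = J $$ (j+k,j+k)"
        unfolding J'_def using i' j' by simp_all
      have "j+k = i+k \<or> (j+k = Suc (i+k) \<and> J $$ (i+k,j+k) = 1 \<and> J $$ (i+k,i+k) = J $$ (j+k,j+k))"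
        by (rule jchar_D[OF Jj]) (use i' j' nz e dJ in auto)
      then show "j = i \<or> (j = Suc i \<and> J' $$ (i,j) = 1 \<and> J' $$ (i,i) = J' $$ (j,j))" using e by auto
    qed
    have "n - k < n" using k0 kn by simp
    from less.IH[OF this J'c J'j] obtain n_as where J'e: "J' = jordan_matrix n_as" by blast
    have sl: "sum_list (map fst n_as) = n - k" using arg_cong[OF J'e, of dim_row] unfolding J'_def by simp
    have "J = jordan_matrix ((k,a) # n_as)"
    proof (rule eq_matI)
      show "dim_row J = dim_row (jordan_matrix ((k, a) # n_as))" using dJ sl kn by simp
      show "dim_col J = dim_col (jordan_matrix ((k, a) # n_as))" using dJ sl kn by simp
      fix i j assume "i < dim_row (jordan_matrix ((k, a) # n_as))" "j < dim_col (jordan_matrix ((k, a) # n_as))"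
      then have i: "i < n" and j: "j < n" using sl kn by auto
      have E: "jordan_matrix ((k,a) # n_as) $$ (i,j) = (if i < k then if j < k then (if i = j then a else if Suc i = j then 1 else 0) else 0
          else if j < k then 0 else J' $$ (i-k, j-k))"
        unfolding jordan_matrix_Cons J'e[symmetric] using i j sl kn J'c by simp
      have lower: "J $$ (i,j) = 0" if "j < i" using jchar_upper[OF Jj] that i dJ unfolding upper_triangular_def by auto
      have zero_far: "J $$ (i,j) = 0" if "j \<noteq> i" "j \<noteq> Suc i"
        using jchar_D[OF Jj _ _] that i j dJ by auto
      show "J $$ (i,j) = jordan_matrix ((k, a) # n_as) $$ (i,j)"
      proof (cases "i < k")
        case ik: True
        show ?thesis
        proof (cases "j < k")
          case jk: True
          show ?thesis unfolding E using ik jk diag sup1[of i] zero_far by auto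
        next
          case jk: False
          have "J $$ (i,j) = 0"
          proof (cases "j = Suc i")
            case True
            then have "j = k" "i = k - 1" using ik jk by auto
            then have "k \<noteq> n" using j by simp
            then show ?thesis using kend \<open>j = k\<close> \<open>i = k - 1\<close> by simp
          next
            case False then show ?thesis using zero_far ik jk by auto
          qed
          then show ?thesis unfolding E using ik jk by simp
        qed
      next
        case ik: False
        show ?thesis
        proof (cases "j < k")
          case jk: True
          then show ?thesis unfolding E using ik jk lower by simp
        next
          case jk: False
          then show ?thesis unfolding E using ik jk i j unfolding J'_def by simp
        qed
      qed
    qed
    then show ?thesis by blast
  qed
qed

lemma canonical_iff: "canonical_jordan J \<longleftrightarrow> (J \<in> carrier_mat (dim_row J) (dim_row J) \<and> jchar J)"
proof
  assume "canonical_jordan J"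
  then obtain n_as where "J = jordan_matrix n_as" unfolding canonical_jordan_def by blast
  then show "J \<in> carrier_mat (dim_row J) (dim_row J) \<and> jchar J" using jordan_jchar by simp
next
  assume "J \<in> carrier_mat (dim_row J) (dim_row J) \<and> jchar J"
  then show "canonical_jordan J" using jchar_jordan unfolding canonical_jordan_def by blast
qed

lemma divmod_lt_cases:
  fixes i j M :: nat
  assumes "j < i"
  shows "(i div M = j div M \<and> j mod M < i mod M) \<or> j div M < i div M"
proof -
  have le: "j div M \<le> i div M" using assms by (simp add: div_le_mono)
  show ?thesis
  proof (cases "i div M = j div M")
    case True
    then have "i div M * M = j div M * M" by simp
    then have "j mod M < i mod M" using div_mult_mod_eq[of i M] div_mult_mod_eq[of j M] assms by linarith
    then show ?thesis using True by simp
  next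
    case False then show ?thesis using le by simp
  qed
qed

lemma ks2_upper:
  assumes A: "A \<in> carrier_mat M M" and B: "B \<in> carrier_mat m m"
    and uA: "upper_triangular A" and uB: "upper_triangular B"
  shows "upper_triangular (ks2 A B m M)"
  unfolding upper_triangular_def
proof (intro allI impI)
  fix i j assume i: "i < dim_row (ks2 A B m M)" and ji: "j < i"
  have i': "i < m*M" using i ks2_carrier[OF A B] by (simp add: carrier_matD)
  have j': "j < m*M" using i' ji by simp
  have dA: "dim_row A = M" and dB: "dim_row B = m" using A B by (simp_all add: carrier_matD)
  note E = ks2_index[OF A B i' j']
  from divmod_lt_cases[OF ji, of M] show "ks2 A B m M $$ (i,j) = 0"
  proof
    assume h: "i div M = j div M \<and> j mod M < i mod M"
    have "A $$ (i mod M, j mod M) = 0" using uA h mod_lt[OF i'] dA unfolding upper_triangular_def by auto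
    then show ?thesis unfolding E using h by simp
  next
    assume h: "j div M < i div M"
    have "B $$ (i div M, j div M) = 0" using uB h div_lt[OF i'] dB unfolding upper_triangular_def by auto
    then show ?thesis unfolding E using h by simp
  qed
qed

lemma ks2_diag:
  assumes A: "A \<in> carrier_mat M M" and B: "B \<in> carrier_mat m m"
    and dA: "diagonal_mat A" and dB: "diagonal_mat B"
  shows "diagonal_mat (ks2 A B m M)"
  unfolding diagonal_mat_def
proof (intro allI impI)
  fix i j assume i: "i < dim_row (ks2 A B m M)" and j: "j < dim_col (ks2 A B m M)" and ij: "i \<noteq> j"
  have i': "i < m*M" and j': "j < m*M" using i j ks2_carrier[OF A B] by (simp_all add: carrier_matD)
  have d: "dim_row A = M" "dim_col A = M" "dim_row B = m" "dim_col B = m" using A B by (simp_all add: carrier_matD)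
  note E = ks2_index[OF A B i' j']
  show "ks2 A B m M $$ (i,j) = 0"
  proof (cases "i div M = j div M")
    case True
    then have "i mod M \<noteq> j mod M" using ij div_mod_eq by blast
    then have "A $$ (i mod M, j mod M) = 0" using dA mod_lt[OF i'] mod_lt[OF j'] d unfolding diagonal_mat_def by auto
    then show ?thesis unfolding E using True \<open>i mod M \<noteq> j mod M\<close> by simp
  next
    case False
    then have "B $$ (i div M, j div M) = 0" using dB div_lt[OF i'] div_lt[OF j'] d unfolding diagonal_mat_def by auto
    then show ?thesis unfolding E using False by simp
  qed
qed

lemma ks2_jchar:
  fixes A B :: "'a::field mat"
  assumes A: "A \<in> carrier_mat M M" and B: "B \<in> carrier_mat m m"
    and jA: "jchar A" and dB: "diagonal_mat B"
  shows "jchar (ks2 A B m M)"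
  unfolding jchar_def
proof (intro allI impI)
  fix i j assume i: "i < dim_row (ks2 A B m M)" and j: "j < dim_row (ks2 A B m M)"
    and nz: "ks2 A B m M $$ (i,j) \<noteq> 0"
  have i': "i < m*M" and j': "j < m*M" using i j ks2_carrier[OF A B] by (simp_all add: carrier_matD)
  have d: "dim_row A = M" "dim_col A = M" "dim_row B = m" "dim_col B = m" using A B by (simp_all add: carrier_matD)
  note E = ks2_index[OF A B i' j']
  note Eii = ks2_index[OF A B i' i']
  note Ejj = ks2_index[OF A B j' j']
  have pq: "i div M = j div M"
  proof (rule ccontr)
    assume h: "i div M \<noteq> j div M"
    then have "B $$ (i div M, j div M) = 0" using dB div_lt[OF i'] div_lt[OF j'] d unfolding diagonal_mat_def by auto
    then show False using nz h unfolding E by simp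
  qed
  show "j = i \<or> (j = Suc i \<and> ks2 A B m M $$ (i,j) = 1 \<and> ks2 A B m M $$ (i,i) = ks2 A B m M $$ (j,j))"
  proof (cases "i mod M = j mod M")
    case True
    then show ?thesis using pq div_mod_eq by blast
  next
    case False
    have nzA: "A $$ (i mod M, j mod M) \<noteq> 0" using nz False pq unfolding E by simp
    from jchar_D[OF jA _ _ nzA] mod_lt[OF i'] mod_lt[OF j'] d False
    have h: "j mod M = Suc (i mod M)" "A $$ (i mod M, j mod M) = 1"
      "A $$ (i mod M, i mod M) = A $$ (j mod M, j mod M)" by auto
    have pqM: "i div M * M = j div M * M" using pq by simp
    have "j = Suc i"
      using div_mult_mod_eq[of i M] div_mult_mod_eq[of j M] pqM h(1) by linarith
    moreover have "ks2 A B m M $$ (i,j) = 1" unfolding E using pq False h by simp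
    moreover have "ks2 A B m M $$ (i,i) = ks2 A B m M $$ (j,j)" unfolding Eii Ejj using pq h by simp
    ultimately show ?thesis by blast
  qed
qed

lemma ks2_not_jchar1:
  fixes A B :: "'a::field mat"
  assumes A: "A \<in> carrier_mat M M" and B: "B \<in> carrier_mat m m" and m: "m \<ge> 1"
    and jA: "\<not> jchar A"
  shows "\<not> jchar (ks2 A B m M)"
proof
  assume jK: "jchar (ks2 A B m M)"
  have d: "dim_row A = M" "dim_col A = M" "dim_row B = m" "dim_col B = m" using A B by (simp_all add: carrier_matD)
  from jA obtain x y where x: "x < M" and y: "y < M" and nz: "A $$ (x,y) \<noteq> 0"
    and nd: "\<not> (y = x \<or> (y = Suc x \<and> A $$ (x,y) = 1 \<and> A $$ (x,x) = A $$ (y,y)))"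
    unfolding jchar_def d by blast
  have Mm: "M \<le> m*M" using m by simp
  have xm: "x < m*M" and ym: "y < m*M" using x y Mm by linarith+
  have dv: "x div M = 0" "y div M = 0" "x mod M = x" "y mod M = y" using x y by simp_all
  have yx: "y \<noteq> x" using nd by blast
  have E: "ks2 A B m M $$ (x,y) = A $$ (x,y)" unfolding ks2_index[OF A B xm ym] dv using yx by simp
  have Ex: "ks2 A B m M $$ (x,x) = A $$ (x,x) + B $$ (0,0)" unfolding ks2_index[OF A B xm xm] dv by simp
  have Ey: "ks2 A B m M $$ (y,y) = A $$ (y,y) + B $$ (0,0)" unfolding ks2_index[OF A B ym ym] dv by simp
  have dk: "dim_row (ks2 A B m M) = m*M" using ks2_carrier[OF A B] by (simp add: carrier_matD)
  from jchar_D[OF jK, of x y] xm ym nz dk E Ex Ey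
  have "y = x \<or> (y = Suc x \<and> A $$ (x,y) = 1 \<and> A $$ (x,x) + B $$ (0,0) = A $$ (y,y) + B $$ (0,0))" by simp
  then show False using nd by auto
qed

lemma jchar_nondiag:
  fixes B :: "'a::{zero,one} mat"
  assumes B: "B \<in> carrier_mat m m" and jB: "jchar B" and nd: "\<not> diagonal_mat B"
  shows "\<exists>c. Suc c < m \<and> B $$ (c, Suc c) = 1 \<and> (\<forall>c'<c. B $$ (c', Suc c') \<noteq> 1)"
proof -
  have d: "dim_row B = m" "dim_col B = m" using B by (simp_all add: carrier_matD)
  from nd obtain i j where i: "i < m" and j: "j < m" and ij: "i \<noteq> j" and nz: "B $$ (i,j) \<noteq> 0"
    unfolding diagonal_mat_def d by blast
  from jchar_D[OF jB _ _ nz] i j ij d have "j = Suc i" "B $$ (i,j) = 1" by auto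
  then have ex: "\<exists>c. Suc c < m \<and> B $$ (c, Suc c) = 1" using j by blast
  define Q where "Q = (\<lambda>c. Suc c < m \<and> B $$ (c, Suc c) = 1)"
  have ex': "\<exists>c. Q c" using ex unfolding Q_def .
  define c where "c = (LEAST c. Q c)"
  have Qc: "Q c" unfolding c_def using ex' by (rule LeastI_ex)
  have nQ: "\<not> Q c'" if "c' < c" for c' using not_less_Least[OF that[unfolded c_def]] unfolding c_def .
  have "\<forall>c'<c. B $$ (c', Suc c') \<noteq> 1"
  proof (intro allI impI)
    fix c' assume "c' < c"
    moreover have "Suc c < m" using Qc unfolding Q_def by simp
    ultimately have "Suc c' < m" by simp
    then show "B $$ (c', Suc c') \<noteq> 1" using nQ[OF \<open>c' < c\<close>] unfolding Q_def by simp
  qed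
  then show ?thesis using Qc unfolding Q_def by blast
qed

lemma ks2_not_jchar2:
  fixes A B :: "'a::field mat"
  assumes A: "A \<in> carrier_mat M M" and B: "B \<in> carrier_mat m m" and M: "M \<ge> 2"
    and jB: "jchar B" and nd: "\<not> diagonal_mat B"
  shows "\<not> jchar (ks2 A B m M)"
proof
  assume jK: "jchar (ks2 A B m M)"
  from jchar_nondiag[OF B jB nd] obtain c where c: "Suc c < m" "B $$ (c, Suc c) = 1" by blast
  have l1: "Suc c * M < m * M" by (rule mult_less_mono1) (use c M in simp_all)
  have l0: "c * M < m * M" by (rule mult_less_mono1) (use c M in simp_all)
  have dv: "(c*M) div M = c" "(Suc c * M) div M = Suc c" "(c*M) mod M = 0" "(Suc c * M) mod M = 0" using M by simp_all
  have E: "ks2 A B m M $$ (c*M, Suc c * M) = 1" unfolding ks2_index[OF A B l0 l1] dv using c by simp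
  have dk: "dim_row (ks2 A B m M) = m*M" using ks2_carrier[OF A B] by (simp add: carrier_matD)
  from jchar_D[OF jK, of "c*M" "Suc c * M"] l0 l1 dk E
  have "Suc c * M = c * M \<or> Suc c * M = Suc (c * M)" by auto
  then show False using M by auto
qed



definition ndw :: "'a::field mat \<Rightarrow> bool" where
  "ndw X \<longleftrightarrow> (\<exists>\<mu> v. v \<in> carrier_vec (dim_row X)
      \<and> char_matrix X \<mu> *\<^sub>v (char_matrix X \<mu> *\<^sub>v v) = 0\<^sub>v (dim_row X)
      \<and> char_matrix X \<mu> *\<^sub>v v \<noteq> 0\<^sub>v (dim_row X))"

lemma mat_vec_entry:
  assumes "A \<in> carrier_mat n m" "y \<in> carrier_vec m" "i < n"
  shows "(A *\<^sub>v y) $ i = (\<Sum>t<m. A $$ (i,t) * y $ t)"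
  using assms by (simp add: carrier_matD carrier_vecD scalar_prod_def atLeast0LessThan)

lemma mat_vec_unit:
  fixes A :: "'a::semiring_1 mat"
  assumes A: "A \<in> carrier_mat n m" and k: "k < m" and i: "i < n"
  shows "(A *\<^sub>v unit_vec m k) $ i = A $$ (i,k)"
proof -
  have "(A *\<^sub>v unit_vec m k) $ i = (\<Sum>t<m. A $$ (i,t) * unit_vec m k $ t)"
    by (rule mat_vec_entry[OF A unit_vec_carrier i])
  also have "\<dots> = (\<Sum>t<m. if t = k then A $$ (i,k) else 0)"
    by (rule sum.cong) (auto simp: k)
  also have "\<dots> = A $$ (i,k)" using k by simp
  finally show ?thesis .
qed

lemma mat_vec_zero: "A \<in> carrier_mat n m \<Longrightarrow> A *\<^sub>v 0\<^sub>v m = 0\<^sub>v n"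
  by (intro eq_vecI) (simp_all add: carrier_matD)

lemma diag_mat_vec:
  assumes A: "A \<in> carrier_mat n n" and dA: "diagonal_mat A" and y: "y \<in> carrier_vec n" and i: "i < n"
  shows "(A *\<^sub>v y) $ i = A $$ (i,i) * y $ i"
proof -
  have d: "dim_row A = n" "dim_col A = n" using A by (simp_all add: carrier_matD)
  have "(A *\<^sub>v y) $ i = (\<Sum>t<n. A $$ (i,t) * y $ t)" by (rule mat_vec_entry[OF A y i])
  also have "\<dots> = (\<Sum>t<n. if t = i then A $$ (i,i) * y $ i else 0)"
    by (rule sum.cong) (use dA d i in \<open>auto simp: diagonal_mat_def\<close>)
  also have "\<dots> = A $$ (i,i) * y $ i" using i by simp
  finally show ?thesis .
qed

lemma diagonalizable_not_ndw:
  fixes X :: "'a::field mat"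
  assumes X: "X \<in> carrier_mat n n" and dX: "diagonalizable X"
  shows "\<not> ndw X"
proof
  assume ndwX: "ndw X"
  have dXn: "dim_row X = n" using X by (simp add: carrier_matD)
  from ndwX obtain \<mu> v where v: "v \<in> carrier_vec n"
    and z: "char_matrix X \<mu> *\<^sub>v (char_matrix X \<mu> *\<^sub>v v) = 0\<^sub>v n"
    and nz: "char_matrix X \<mu> *\<^sub>v v \<noteq> 0\<^sub>v n"
    unfolding ndw_def dXn by blast
  from dX obtain Dm where dD: "diagonal_mat Dm" and sim: "similar_mat X Dm" unfolding diagonalizable_def by blast
  from sim obtain P Q where wit: "similar_mat_wit X Dm P Q" unfolding similar_mat_def by blast
  have wit2: "similar_mat_wit (char_matrix X \<mu>) (char_matrix Dm \<mu>) P Q"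
    by (rule similar_mat_wit_char_matrix[OF wit])
  have nX: "n = dim_row X" using X by (simp add: carrier_matD)
  from similar_mat_witD[OF nX wit] have
    Dc: "Dm \<in> carrier_mat n n" and P: "P \<in> carrier_mat n n" and Q: "Q \<in> carrier_mat n n"
    and PQ: "P * Q = 1\<^sub>m n" and QP: "Q * P = 1\<^sub>m n" by blast+
  have nX2: "n = dim_row (char_matrix X \<mu>)" using X by (simp add: carrier_matD char_matrix_def)
  from similar_mat_witD[OF nX2 wit2] have
    NE: "char_matrix X \<mu> = P * char_matrix Dm \<mu> * Q" by blast
  define D' where "D' = char_matrix Dm \<mu>"
  have D'c: "D' \<in> carrier_mat n n" unfolding D'_def using Dc by simp
  have dD': "diagonal_mat D'" unfolding diagonal_mat_def
  proof (intro allI impI)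
    fix i j assume "i < dim_row D'" "j < dim_col D'" "i \<noteq> j"
    then have ij: "i < n" "j < n" "i \<noteq> j" using D'c by (simp_all add: carrier_matD)
    have "Dm $$ (i,j) = 0" using dD ij Dc unfolding diagonal_mat_def by (simp add: carrier_matD)
    then show "D' $$ (i,j) = 0" unfolding D'_def char_matrix_def using ij Dc by (simp add: carrier_matD)
  qed
  define w where "w = Q *\<^sub>v v"
  have w: "w \<in> carrier_vec n" unfolding w_def using Q v by simp
  have QPv: "Q *\<^sub>v (P *\<^sub>v y) = y" if "y \<in> carrier_vec n" for y
  proof -
    have "Q *\<^sub>v (P *\<^sub>v y) = (Q * P) *\<^sub>v y" using Q P that by simp
    then show ?thesis using QP that by simp
  qed
  have Nv: "char_matrix X \<mu> *\<^sub>v y = P *\<^sub>v (D' *\<^sub>v (Q *\<^sub>v y))" if "y \<in> carrier_vec n" for y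
  proof -
    have "char_matrix X \<mu> *\<^sub>v y = (P * D' * Q) *\<^sub>v y" unfolding NE D'_def ..
    also have "\<dots> = (P * D') *\<^sub>v (Q *\<^sub>v y)" using P D'c Q that by (metis assoc_mult_mat_vec mult_carrier_mat)
    also have "\<dots> = P *\<^sub>v (D' *\<^sub>v (Q *\<^sub>v y))" using P D'c Q that by simp
    finally show ?thesis .
  qed
  have NNv: "char_matrix X \<mu> *\<^sub>v (char_matrix X \<mu> *\<^sub>v v) = P *\<^sub>v (D' *\<^sub>v (D' *\<^sub>v w))"
    unfolding Nv[OF v] w_def[symmetric]
    by (subst Nv) (use P D'c w QPv in simp_all)
  have "D' *\<^sub>v (D' *\<^sub>v w) = Q *\<^sub>v (P *\<^sub>v (D' *\<^sub>v (D' *\<^sub>v w)))" using QPv D'c w by simp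
  also have "\<dots> = 0\<^sub>v n" using z NNv mat_vec_zero[OF Q] by simp
  finally have zz: "D' *\<^sub>v (D' *\<^sub>v w) = 0\<^sub>v n" .
  have "D' *\<^sub>v w = 0\<^sub>v n"
  proof (rule eq_vecI)
    fix i assume "i < dim_vec (0\<^sub>v n :: 'a vec)"
    then have i: "i < n" by simp
    have "(D' *\<^sub>v (D' *\<^sub>v w)) $ i = D' $$ (i,i) * (D' $$ (i,i) * w $ i)"
      using diag_mat_vec[OF D'c dD' _ i] D'c w by simp
    then have "D' $$ (i,i) * (D' $$ (i,i) * w $ i) = 0" using zz i by simp
    then have "D' $$ (i,i) * w $ i = 0" by simp
    then show "(D' *\<^sub>v w) $ i = 0\<^sub>v n $ i" using diag_mat_vec[OF D'c dD' w i] i by simp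
  qed (use D'c in simp)
  then have "char_matrix X \<mu> *\<^sub>v v = 0\<^sub>v n" unfolding Nv[OF v] w_def[symmetric] using mat_vec_zero[OF P] by simp
  with nz show False by simp
qed

lemma jchar_ndw:
  fixes J :: "'a::field mat"
  assumes Jc: "J \<in> carrier_mat n n" and jJ: "jchar J" and nd: "\<not> diagonal_mat J"
  shows "ndw J"
proof -
  have d: "dim_row J = n" "dim_col J = n" using Jc by (simp_all add: carrier_matD)
  from jchar_nondiag[OF Jc jJ nd] obtain c where c: "Suc c < n" "J $$ (c, Suc c) = 1"
    and mn: "\<forall>c'<c. J $$ (c', Suc c') \<noteq> 1" by blast
  define \<mu> where "\<mu> = J $$ (c,c)"
  define N where "N = char_matrix J \<mu>"
  have Nc: "N \<in> carrier_mat n n" unfolding N_def using Jc by simp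
  have Ne: "N $$ (i,j) = J $$ (i,j) - (if i = j then \<mu> else 0)" if "i < n" "j < n" for i j
    unfolding N_def char_matrix_def using that d by simp
  have eqd: "J $$ (c,c) = J $$ (Suc c, Suc c)"
    using jchar_D[OF jJ, of c "Suc c"] c d by simp
  have cn: "c < n" using c by simp
  have N1: "N *\<^sub>v unit_vec n (Suc c) = unit_vec n c"
  proof (rule eq_vecI)
    fix i assume "i < dim_vec (unit_vec n c :: 'a vec)"
    then have i: "i < n" by simp
    have "(N *\<^sub>v unit_vec n (Suc c)) $ i = N $$ (i, Suc c)" by (rule mat_vec_unit[OF Nc c(1) i])
    also have "\<dots> = unit_vec n c $ i"
    proof (cases "i = c")
      case True then show ?thesis using Ne[OF i c(1)] c by simp
    next
      case False
      show ?thesis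
      proof (cases "i = Suc c")
        case True then show ?thesis using Ne[OF i c(1)] eqd i unfolding \<mu>_def by simp
      next
        case False2: False
        have "J $$ (i, Suc c) = 0"
        proof (rule ccontr)
          assume "J $$ (i, Suc c) \<noteq> 0"
          from jchar_D[OF jJ _ _ this] i c d False False2 show False by auto
        qed
        then show ?thesis using Ne[OF i c(1)] False False2 i cn by simp
      qed
    qed
    finally show "(N *\<^sub>v unit_vec n (Suc c)) $ i = unit_vec n c $ i" .
  qed (use Nc in simp)
  have N2: "N *\<^sub>v unit_vec n c = 0\<^sub>v n"
  proof (rule eq_vecI)
    fix i assume "i < dim_vec (0\<^sub>v n :: 'a vec)"
    then have i: "i < n" by simp
    have "(N *\<^sub>v unit_vec n c) $ i = N $$ (i, c)" by (rule mat_vec_unit[OF Nc cn i])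
    also have "\<dots> = 0"
    proof (cases "i = c")
      case True then show ?thesis using Ne[OF i cn] unfolding \<mu>_def by simp
    next
      case False
      have "J $$ (i, c) = 0"
      proof (rule ccontr)
        assume "J $$ (i, c) \<noteq> 0"
        from jchar_D[OF jJ _ _ this] i cn d False have "c = Suc i" "J $$ (i, c) = 1" by auto
        then show False using mn by auto
      qed
      then show ?thesis using Ne[OF i cn] False by simp
    qed
    finally show "(N *\<^sub>v unit_vec n c) $ i = 0\<^sub>v n $ i" using i by simp
  qed (use Nc in simp)
  show ?thesis unfolding ndw_def d
    by (rule exI[of _ \<mu>], rule exI[of _ "unit_vec n (Suc c)"])
       (use N1 N2 cn in \<open>simp add: N_def[symmetric]\<close>)
qed

lemma ks2_shift:
  fixes A B :: "'a::field mat"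
  assumes A: "A \<in> carrier_mat M M" and B: "B \<in> carrier_mat m m"
  shows "char_matrix (ks2 A B m M) (a + b) = ks2 (char_matrix A a) (char_matrix B b) m M"
proof -
  have A': "char_matrix A a \<in> carrier_mat M M" and B': "char_matrix B b \<in> carrier_mat m m"
    using A B by simp_all
  have K: "ks2 A B m M \<in> carrier_mat (m*M) (m*M)" by (rule ks2_carrier[OF A B])
  have K': "ks2 (char_matrix A a) (char_matrix B b) m M \<in> carrier_mat (m*M) (m*M)" by (rule ks2_carrier[OF A' B'])
  show ?thesis
  proof (rule eq_matI)
    fix i j assume "i < dim_row (ks2 (char_matrix A a) (char_matrix B b) m M)"
      "j < dim_col (ks2 (char_matrix A a) (char_matrix B b) m M)"
    then have i: "i < m*M" and j: "j < m*M" using K' by (simp_all add: carrier_matD)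
    have dA: "dim_row A = M" and dB: "dim_row B = m" and dK: "dim_row (ks2 A B m M) = m*M"
      using A B K by (simp_all add: carrier_matD)
    have cA: "char_matrix A a $$ (x,y) = A $$ (x,y) - (if x = y then a else 0)" if "x < M" "y < M" for x y
      unfolding char_matrix_def using that A by (simp add: carrier_matD)
    have cB: "char_matrix B b $$ (x,y) = B $$ (x,y) - (if x = y then b else 0)" if "x < m" "y < m" for x y
      unfolding char_matrix_def using that B by (simp add: carrier_matD)
    have cK: "char_matrix (ks2 A B m M) (a+b) $$ (i,j) = ks2 A B m M $$ (i,j) - (if i = j then a + b else 0)"
      unfolding char_matrix_def using i j K by (simp add: carrier_matD)
    have ieq: "(i = j) = (i div M = j div M \<and> i mod M = j mod M)" using div_mod_eq by blast
    show "char_matrix (ks2 A B m M) (a+b) $$ (i,j) = ks2 (char_matrix A a) (char_matrix B b) m M $$ (i,j)"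
      unfolding cK ks2_index[OF A B i j] ks2_index[OF A' B' i j] ieq
        cA[OF mod_lt[OF i] mod_lt[OF j]] cB[OF div_lt[OF i] div_lt[OF j]]
      by (cases "i div M = j div M"; cases "i mod M = j mod M") (simp_all add: algebra_simps)
  qed (use K K' in \<open>simp_all add: carrier_matD char_matrix_def\<close>)
qed

definition emb1 :: "nat \<Rightarrow> nat \<Rightarrow> 'a::zero vec \<Rightarrow> 'a vec" where
  "emb1 m M v = vec (m*M) (\<lambda>t. if t < M then v $ t else 0)"

definition emb2 :: "nat \<Rightarrow> nat \<Rightarrow> 'a::zero vec \<Rightarrow> 'a vec" where
  "emb2 m M u = vec (m*M) (\<lambda>t. if t mod M = 0 then u $ (t div M) else 0)"

lemma emb1_carrier: "emb1 m M v \<in> carrier_vec (m*M)" unfolding emb1_def by simp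
lemma emb2_carrier: "emb2 m M v \<in> carrier_vec (m*M)" unfolding emb2_def by simp

lemma emb1_zero: "emb1 m M (0\<^sub>v M) = 0\<^sub>v (m*M)"
  unfolding emb1_def by (intro eq_vecI) simp_all

lemma emb2_zero: "emb2 m M (0\<^sub>v m) = 0\<^sub>v (m*M)"
  unfolding emb2_def by (intro eq_vecI) (simp_all add: div_lt)

lemma emb1_nz:
  assumes v: "v \<in> carrier_vec M" and m: "m \<ge> 1" and nz: "v \<noteq> 0\<^sub>v M"
  shows "emb1 m M v \<noteq> 0\<^sub>v (m*M)"
proof
  assume z: "emb1 m M v = 0\<^sub>v (m*M)"
  have "v = 0\<^sub>v M"
  proof (rule eq_vecI)
    fix t assume "t < dim_vec (0\<^sub>v M :: 'a vec)"
    then have t: "t < M" by simp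
    have Mm: "M \<le> m*M" using m by simp
    have tm: "t < m*M" using t Mm by linarith
    have "emb1 m M v $ t = v $ t" unfolding emb1_def using t tm by simp
    then show "v $ t = 0\<^sub>v M $ t" using z tm t by simp
  qed (use v in simp)
  with nz show False by simp
qed

lemma emb2_nz:
  assumes u: "u \<in> carrier_vec m" and M: "M \<ge> 1" and nz: "u \<noteq> 0\<^sub>v m"
  shows "emb2 m M u \<noteq> 0\<^sub>v (m*M)"
proof
  assume z: "emb2 m M u = 0\<^sub>v (m*M)"
  have "u = 0\<^sub>v m"
  proof (rule eq_vecI)
    fix b assume "b < dim_vec (0\<^sub>v m :: 'a vec)"
    then have b: "b < m" by simp
    have bm: "b * M < m*M" by (rule mult_less_mono1) (use b M in simp_all)
    have "emb2 m M u $ (b*M) = u $ b" unfolding emb2_def using bm M by simp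
    then show "u $ b = 0\<^sub>v m $ b" using z bm b by simp
  qed (use u in simp)
  with nz show False by simp
qed

lemma ks2_emb1:
  fixes A B :: "'a::field mat"
  assumes A: "A \<in> carrier_mat M M" and B: "B \<in> carrier_mat m m" and m: "m \<ge> 1"
    and B0: "\<forall>i<m. B $$ (i,0) = 0" and v: "v \<in> carrier_vec M"
  shows "ks2 A B m M *\<^sub>v emb1 m M v = emb1 m M (A *\<^sub>v v)"
proof (rule eq_vecI)
  have K: "ks2 A B m M \<in> carrier_mat (m*M) (m*M)" by (rule ks2_carrier[OF A B])
  fix i assume "i < dim_vec (emb1 m M (A *\<^sub>v v))"
  then have i: "i < m*M" unfolding emb1_def by simp
  have Mm: "M \<le> m*M" using m by simp
  have "(ks2 A B m M *\<^sub>v emb1 m M v) $ i = (\<Sum>t<m*M. ks2 A B m M $$ (i,t) * emb1 m M v $ t)"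
    by (rule mat_vec_entry[OF K emb1_carrier i])
  also have "\<dots> = (\<Sum>t<M. ks2 A B m M $$ (i,t) * v $ t)"
  proof -
    have tm: "\<And>x. x < M \<Longrightarrow> x < m*M" using Mm by linarith
    have "(\<Sum>t<m*M. ks2 A B m M $$ (i,t) * emb1 m M v $ t) = (\<Sum>t<M. ks2 A B m M $$ (i,t) * emb1 m M v $ t)"
      by (rule sum.mono_neutral_right) (use Mm in \<open>auto simp: emb1_def\<close>)
    also have "\<dots> = (\<Sum>t<M. ks2 A B m M $$ (i,t) * v $ t)"
      by (rule sum.cong) (use tm in \<open>auto simp: emb1_def\<close>)
    finally show ?thesis .
  qed
  also have "\<dots> = (\<Sum>t<M. (if i div M = 0 then A $$ (i mod M, t) else 0) * v $ t)"
  proof (rule sum.cong[OF refl])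
    fix t assume "t \<in> {..<M}"
    then have t: "t < M" by simp
    then have tm: "t < m*M" using Mm by linarith
    have "B $$ (i div M, 0) = 0" using B0 div_lt[OF i] by simp
    then show "ks2 A B m M $$ (i,t) * v $ t = (if i div M = 0 then A $$ (i mod M, t) else 0) * v $ t"
      unfolding ks2_index[OF A B i tm] using t by simp
  qed
  also have "\<dots> = emb1 m M (A *\<^sub>v v) $ i"
  proof (cases "i < M")
    case True
    then show ?thesis unfolding emb1_def using i mat_vec_entry[OF A v True] by simp
  next
    case False
    have M0: "M \<noteq> 0" using i by (cases "M = 0") simp_all
    have "i div M \<noteq> 0" using False M0 by (simp add: div_eq_0_iff)
    then show ?thesis unfolding emb1_def using i False by simp
  qed
  finally show "(ks2 A B m M *\<^sub>v emb1 m M v) $ i = emb1 m M (A *\<^sub>v v) $ i" .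
qed (simp add: emb1_def ks2_carrier[OF A B, THEN carrier_matD(1)])

lemma ks2_emb2:
  fixes A B :: "'a::field mat"
  assumes A: "A \<in> carrier_mat M M" and B: "B \<in> carrier_mat m m" and M: "M \<ge> 1"
    and A0: "\<forall>i<M. A $$ (i,0) = 0" and u: "u \<in> carrier_vec m"
  shows "ks2 A B m M *\<^sub>v emb2 m M u = emb2 m M (B *\<^sub>v u)"
proof (rule eq_vecI)
  have K: "ks2 A B m M \<in> carrier_mat (m*M) (m*M)" by (rule ks2_carrier[OF A B])
  fix i assume "i < dim_vec (emb2 m M (B *\<^sub>v u))"
  then have i: "i < m*M" unfolding emb2_def by simp
  define g where "g = (\<lambda>b y. ((if i div M = b then A $$ (i mod M, y) else 0)
      + B $$ (i div M, b) * (if i mod M = y then 1 else 0)) * (if y = 0 then u $ b else 0))"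
  have "(ks2 A B m M *\<^sub>v emb2 m M u) $ i = (\<Sum>t<m*M. ks2 A B m M $$ (i,t) * emb2 m M u $ t)"
    by (rule mat_vec_entry[OF K emb2_carrier i])
  also have "\<dots> = (\<Sum>t<m*M. g (t div M) (t mod M))"
    by (rule sum.cong[OF refl]) (simp add: ks2_index[OF A B i] g_def emb2_def)
  also have "\<dots> = (\<Sum>b<m. \<Sum>y<M. g b y)" by (rule sum_div_mod)
  also have "\<dots> = (\<Sum>b<m. g b 0)"
  proof (rule sum.cong[OF refl])
    fix b assume "b \<in> {..<m}"
    have "(\<Sum>y<M. g b y) = (\<Sum>y<M. if y = 0 then g b 0 else 0)"
      by (rule sum.cong) (auto simp: g_def)
    also have "\<dots> = g b 0" using M by simp
    finally show "(\<Sum>y<M. g b y) = g b 0" .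
  qed
  also have "\<dots> = (\<Sum>b<m. (if i mod M = 0 then B $$ (i div M, b) * u $ b else 0))"
  proof (rule sum.cong[OF refl])
    fix b assume "b \<in> {..<m}"
    have A1: "A $$ (i mod M, 0) = 0" using A0 mod_lt[OF i] by simp
    have A00: "A $$ (0, 0) = 0" using A0 M by simp
    show "g b 0 = (if i mod M = 0 then B $$ (i div M, b) * u $ b else 0)"
      by (cases "i mod M = 0") (simp_all add: g_def A1 A00)
  qed
  also have "\<dots> = emb2 m M (B *\<^sub>v u) $ i"
  proof (cases "i mod M = 0")
    case True
    then show ?thesis unfolding emb2_def using i mat_vec_entry[OF B u div_lt[OF i]] by simp
  next
    case False
    then show ?thesis unfolding emb2_def using i by simp
  qed
  finally show "(ks2 A B m M *\<^sub>v emb2 m M u) $ i = emb2 m M (B *\<^sub>v u) $ i" .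
qed (simp add: emb2_def ks2_carrier[OF A B, THEN carrier_matD(1)])

lemma ndw_ks2_left:
  fixes A B :: "'a::field mat"
  assumes A: "A \<in> carrier_mat M M" and B: "B \<in> carrier_mat m m" and m: "m \<ge> 1"
    and uB: "upper_triangular B" and nA: "ndw A"
  shows "ndw (ks2 A B m M)"
proof -
  have dA: "dim_row A = M" using A by (simp add: carrier_matD)
  from nA obtain \<mu> v where v: "v \<in> carrier_vec M"
    and z: "char_matrix A \<mu> *\<^sub>v (char_matrix A \<mu> *\<^sub>v v) = 0\<^sub>v M"
    and nz: "char_matrix A \<mu> *\<^sub>v v \<noteq> 0\<^sub>v M" unfolding ndw_def dA by blast
  define b where "b = B $$ (0,0)"
  define NA where "NA = char_matrix A \<mu>"
  define NB where "NB = char_matrix B b"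
  have NAc: "NA \<in> carrier_mat M M" and NBc: "NB \<in> carrier_mat m m" unfolding NA_def NB_def using A B by simp_all
  have dB: "dim_row B = m" "dim_col B = m" using B by (simp_all add: carrier_matD)
  have NB0: "\<forall>i<m. NB $$ (i,0) = 0"
  proof (intro allI impI)
    fix i assume i: "i < m"
    have e: "NB $$ (i,0) = B $$ (i,0) - (if i = 0 then b else 0)" unfolding NB_def char_matrix_def using i m dB by simp
    show "NB $$ (i,0) = 0"
    proof (cases "i = 0")
      case True then show ?thesis unfolding e b_def by simp
    next
      case False then show ?thesis unfolding e using uB i dB unfolding upper_triangular_def by simp
    qed
  qed
  have sh: "char_matrix (ks2 A B m M) (\<mu> + b) = ks2 NA NB m M" unfolding NA_def NB_def by (rule ks2_shift[OF A B])
  have NAv: "NA *\<^sub>v v \<in> carrier_vec M" using NAc v by simp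
  have e1: "ks2 NA NB m M *\<^sub>v emb1 m M v = emb1 m M (NA *\<^sub>v v)" by (rule ks2_emb1[OF NAc NBc m NB0 v])
  have e2: "ks2 NA NB m M *\<^sub>v emb1 m M (NA *\<^sub>v v) = emb1 m M (NA *\<^sub>v (NA *\<^sub>v v))" by (rule ks2_emb1[OF NAc NBc m NB0 NAv])
  have dK: "dim_row (ks2 A B m M) = m*M" using ks2_carrier[OF A B] by (simp add: carrier_matD)
  show ?thesis unfolding ndw_def dK
    by (rule exI[of _ "\<mu> + b"], rule exI[of _ "emb1 m M v"])
       (use e1 e2 z nz emb1_carrier emb1_zero emb1_nz[OF NAv m] in \<open>simp add: sh NA_def[symmetric] emb1_carrier emb1_zero\<close>)
qed

lemma ndw_ks2_right:
  fixes A B :: "'a::field mat"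
  assumes A: "A \<in> carrier_mat M M" and B: "B \<in> carrier_mat m m" and M: "M \<ge> 1"
    and uA: "upper_triangular A" and nB: "ndw B"
  shows "ndw (ks2 A B m M)"
proof -
  have dB: "dim_row B = m" using B by (simp add: carrier_matD)
  from nB obtain \<mu> u where u: "u \<in> carrier_vec m"
    and z: "char_matrix B \<mu> *\<^sub>v (char_matrix B \<mu> *\<^sub>v u) = 0\<^sub>v m"
    and nz: "char_matrix B \<mu> *\<^sub>v u \<noteq> 0\<^sub>v m" unfolding ndw_def dB by blast
  define a where "a = A $$ (0,0)"
  define NA where "NA = char_matrix A a"
  define NB where "NB = char_matrix B \<mu>"
  have NAc: "NA \<in> carrier_mat M M" and NBc: "NB \<in> carrier_mat m m" unfolding NA_def NB_def using A B by simp_all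
  have dA: "dim_row A = M" "dim_col A = M" using A by (simp_all add: carrier_matD)
  have NA0: "\<forall>i<M. NA $$ (i,0) = 0"
  proof (intro allI impI)
    fix i assume i: "i < M"
    have e: "NA $$ (i,0) = A $$ (i,0) - (if i = 0 then a else 0)" unfolding NA_def char_matrix_def using i M dA by simp
    show "NA $$ (i,0) = 0"
    proof (cases "i = 0")
      case True then show ?thesis unfolding e a_def by simp
    next
      case False then show ?thesis unfolding e using uA i dA unfolding upper_triangular_def by simp
    qed
  qed
  have sh: "char_matrix (ks2 A B m M) (a + \<mu>) = ks2 NA NB m M" unfolding NA_def NB_def by (rule ks2_shift[OF A B])
  have NBu: "NB *\<^sub>v u \<in> carrier_vec m" using NBc u by simp
  have e1: "ks2 NA NB m M *\<^sub>v emb2 m M u = emb2 m M (NB *\<^sub>v u)" by (rule ks2_emb2[OF NAc NBc M NA0 u])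
  have e2: "ks2 NA NB m M *\<^sub>v emb2 m M (NB *\<^sub>v u) = emb2 m M (NB *\<^sub>v (NB *\<^sub>v u))" by (rule ks2_emb2[OF NAc NBc M NA0 NBu])
  have dK: "dim_row (ks2 A B m M) = m*M" using ks2_carrier[OF A B] by (simp add: carrier_matD)
  show ?thesis unfolding ndw_def dK
    by (rule exI[of _ "a + \<mu>"], rule exI[of _ "emb2 m M u"])
       (use e1 e2 z nz emb2_carrier emb2_zero emb2_nz[OF NBu M] in \<open>simp add: sh NB_def[symmetric] emb2_carrier emb2_zero\<close>)
qed



lemma ksum_1: "ksum X m 1 = X 1"
  by (simp add: One_nat_def)

lemma ksum_upper:
  assumes "k \<ge> 1" "\<forall>i\<in>{1..k}. J i \<in> carrier_mat (m i) (m i) \<and> upper_triangular (J i)"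
  shows "upper_triangular (ksum J m k)"
  using assms
proof (induction k rule: nat_induct_at_least)
  case base then show ?case by (simp add: ksum_1)
next
  case (Suc k)
  have a: "\<forall>i\<in>{1..k}. J i \<in> carrier_mat (m i) (m i) \<and> upper_triangular (J i)" using Suc(3) by auto
  have c: "\<forall>i\<in>{1..k}. J i \<in> carrier_mat (m i) (m i)" using a by blast
  have B: "J (Suc k) \<in> carrier_mat (m (Suc k)) (m (Suc k))" "upper_triangular (J (Suc k))" using Suc(3) by auto
  show ?case unfolding ksum_Suc[OF Suc(1)]
    by (rule ks2_upper[OF ksum_carrier[OF Suc(1) c] B(1) Suc(2)[OF a] B(2)])
qed

lemma ksum_diag:
  assumes "k \<ge> 1" "\<forall>i\<in>{1..k}. J i \<in> carrier_mat (m i) (m i) \<and> diagonal_mat (J i)"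
  shows "diagonal_mat (ksum J m k)"
  using assms
proof (induction k rule: nat_induct_at_least)
  case base then show ?case by (simp add: ksum_1)
next
  case (Suc k)
  have a: "\<forall>i\<in>{1..k}. J i \<in> carrier_mat (m i) (m i) \<and> diagonal_mat (J i)" using Suc(3) by auto
  have c: "\<forall>i\<in>{1..k}. J i \<in> carrier_mat (m i) (m i)" using a by blast
  have B: "J (Suc k) \<in> carrier_mat (m (Suc k)) (m (Suc k))" "diagonal_mat (J (Suc k))" using Suc(3) by auto
  show ?case unfolding ksum_Suc[OF Suc(1)]
    by (rule ks2_diag[OF ksum_carrier[OF Suc(1) c] B(1) Suc(2)[OF a] B(2)])
qed

lemma ksum_ndw:
  fixes J :: "nat \<Rightarrow> 'a::field mat"
  assumes "k \<ge> 1" "\<forall>i\<in>{1..k}. J i \<in> carrier_mat (m i) (m i) \<and> upper_triangular (J i) \<and> m i \<ge> 2"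
    and "\<exists>i\<in>{1..k}. ndw (J i)"
  shows "ndw (ksum J m k)"
  using assms
proof (induction k rule: nat_induct_at_least)
  case base then show ?case by (simp add: ksum_1)
next
  case (Suc k)
  have a: "\<forall>i\<in>{1..k}. J i \<in> carrier_mat (m i) (m i) \<and> upper_triangular (J i) \<and> m i \<ge> 2" using Suc(3) by auto
  have c: "\<forall>i\<in>{1..k}. J i \<in> carrier_mat (m i) (m i)" using a by blast
  have a2: "\<forall>i\<in>{1..k}. J i \<in> carrier_mat (m i) (m i) \<and> upper_triangular (J i)" using a by blast
  have mm: "\<forall>i\<in>{1..k}. m i \<ge> 2" using a by blast
  have B: "J (Suc k) \<in> carrier_mat (m (Suc k)) (m (Suc k))" "upper_triangular (J (Suc k))" "m (Suc k) \<ge> 2"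
    using Suc(3) by auto
  have T: "ksum J m k \<in> carrier_mat (D m k) (D m k)" by (rule ksum_carrier[OF Suc(1) c])
  show ?case
  proof (cases "ndw (J (Suc k))")
    case True
    have M: "D m k \<ge> 1" by (rule D_ge1[OF mm])
    show ?thesis unfolding ksum_Suc[OF Suc(1)]
      by (rule ndw_ks2_right[OF T B(1) M ksum_upper[OF Suc(1) a2] True])
  next
    case False
    then have "\<exists>i\<in>{1..k}. ndw (J i)" using Suc(4) by (auto simp: le_Suc_eq)
    from Suc(2)[OF a this] have "ndw (ksum J m k)" .
    moreover have "m (Suc k) \<ge> 1" using B(3) by simp
    ultimately show ?thesis unfolding ksum_Suc[OF Suc(1)]
      using ndw_ks2_left[OF T B(1) _ B(2)] by blast
  qed
qed

lemma ksum_jchar: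
  fixes J :: "nat \<Rightarrow> 'a::field mat"
  assumes "k \<ge> 1" "\<forall>i\<in>{1..k}. J i \<in> carrier_mat (m i) (m i) \<and> jchar (J i) \<and> m i \<ge> 2"
  shows "jchar (ksum J m k) \<longleftrightarrow> (\<forall>i\<in>{2..k}. diagonal_mat (J i))"
  using assms
proof (induction k rule: nat_induct_at_least)
  case base then show ?case by (simp add: ksum_1)
next
  case (Suc k)
  have a: "\<forall>i\<in>{1..k}. J i \<in> carrier_mat (m i) (m i) \<and> jchar (J i) \<and> m i \<ge> 2" using Suc(3) by auto
  have c: "\<forall>i\<in>{1..k}. J i \<in> carrier_mat (m i) (m i)" using a by blast
  have mm: "\<forall>i\<in>{1..k}. m i \<ge> 2" using a by blast
  have B: "J (Suc k) \<in> carrier_mat (m (Suc k)) (m (Suc k))" "jchar (J (Suc k))" "m (Suc k) \<ge> 2"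
    using Suc(3) by auto
  have T: "ksum J m k \<in> carrier_mat (D m k) (D m k)" by (rule ksum_carrier[OF Suc(1) c])
  have IH: "jchar (ksum J m k) \<longleftrightarrow> (\<forall>i\<in>{2..k}. diagonal_mat (J i))" by (rule Suc(2)[OF a])
  have split: "(\<forall>i\<in>{2..Suc k}. diagonal_mat (J i)) \<longleftrightarrow> (\<forall>i\<in>{2..k}. diagonal_mat (J i)) \<and> diagonal_mat (J (Suc k))"
    using Suc(1) by (auto simp: le_Suc_eq)
  show ?case unfolding ksum_Suc[OF Suc(1)] split
  proof
    assume j: "jchar (ks2 (ksum J m k) (J (Suc k)) (m (Suc k)) (D m k))"
    have "jchar (ksum J m k)"
    proof (rule ccontr)
      assume "\<not> jchar (ksum J m k)"
      from ks2_not_jchar1[OF T B(1) _ this] B(3) j show False by simp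
    qed
    moreover have "diagonal_mat (J (Suc k))"
    proof (rule ccontr)
      assume "\<not> diagonal_mat (J (Suc k))"
      from ks2_not_jchar2[OF T B(1) D_ge2[OF mm Suc(1)] B(2) this] j show False by simp
    qed
    ultimately show "(\<forall>i\<in>{2..k}. diagonal_mat (J i)) \<and> diagonal_mat (J (Suc k))" using IH by simp
  next
    assume h: "(\<forall>i\<in>{2..k}. diagonal_mat (J i)) \<and> diagonal_mat (J (Suc k))"
    then have "jchar (ksum J m k)" using IH by simp
    from ks2_jchar[OF T B(1) this] h show "jchar (ks2 (ksum J m k) (J (Suc k)) (m (Suc k)) (D m k))" by simp
  qed
qed

lemma similar_diagonalizable: "similar_mat A B \<Longrightarrow> diagonalizable A \<longleftrightarrow> diagonalizable B"
  unfolding diagonalizable_def using similar_mat_sym similar_mat_trans by blast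

lemma conj_back:
  fixes U V S :: "'a::field mat"
  assumes U: "U \<in> carrier_mat n n" and V: "V \<in> carrier_mat n n" and S: "S \<in> carrier_mat n n"
    and UV: "U * V = 1\<^sub>m n" and VU: "V * U = 1\<^sub>m n"
  shows "similar_mat S (V * S * U)"
proof -
  have "U * (V * S * U) * V = (U * V) * S * (U * V)"
    using U V S by (simp add: assoc_mult_mat[of _ n n _ n _ n])
  also have "\<dots> = S" using UV S by simp
  finally have e: "S = U * (V * S * U) * V" by simp
  show ?thesis by (rule similar_matI[of _ _ _ _ n]) (use U V S UV VU e in auto)
qed

theorem theorem5p3:
  fixes p n :: nat and m :: "nat \<Rightarrow> nat" and l r :: "nat \<Rightarrow> int"
    and U :: "nat \<Rightarrow> 'e::field mat"
  defines "S \<equiv> (\<lambda>k. Smat (m k) (of_int (l k) :: 'e) (of_int (r k)))"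
  defines "J \<equiv> (\<lambda>k. minv (U k) * S k * U k)"
  assumes "prime p" and "CHAR('e) = p"
    and "n \<ge> 2" and "\<forall>k\<in>{1..n}. m k \<ge> 2"
    and "is_splitting_field
           {gpoly (m k) (of_int (l k) :: 'e) (of_int (r k)) | k. k \<in> {1..n}}"
    and "\<forall>k\<in>{1..n}. U k \<in> carrier_mat (m k) (m k) \<and> invertible_mat (U k)"
    and "\<forall>k\<in>{1..n}. canonical_jordan (J k)"
  shows "invertible_mat (kprod U n)
    \<and> minv (kprod U n) * ksum S m n * kprod U n = ksum J m n
    \<and> upper_triangular (ksum J m n)
    \<and> (canonical_jordan (ksum J m n) \<longleftrightarrow> (\<forall>k\<in>{2..n}. diagonalizable (S k)))
    \<and> (diagonalizable (ksum S m n) \<longleftrightarrow> (\<forall>k\<in>{1..n}. diagonalizable (S k)))"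
proof -
  note mge = assms(6) and Uass = assms(8) and canon = assms(9)
  have n1: "n \<ge> 1" using assms(5) by simp
  define V where "V = (\<lambda>k. minv (U k))"
  have Sc: "S k \<in> carrier_mat (m k) (m k)" for k unfolding S_def Smat_def by simp
  have UV: "U k \<in> carrier_mat (m k) (m k) \<and> V k \<in> carrier_mat (m k) (m k)
          \<and> S k \<in> carrier_mat (m k) (m k) \<and> V k * U k = 1\<^sub>m (m k) \<and> U k * V k = 1\<^sub>m (m k)"
    if k: "k \<in> {1..n}" for k
    using minv_props[of "U k" "m k"] Uass k Sc unfolding V_def by auto
  have Jdef: "J k = V k * S k * U k" for k unfolding J_def V_def ..
  have Jc: "J k \<in> carrier_mat (m k) (m k)" if "k \<in> {1..n}" for k
    unfolding Jdef using UV[OF that] by (metis mult_carrier_mat)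
  have Jj: "jchar (J k)" if "k \<in> {1..n}" for k
    using canon that canonical_iff by blast
  have Ju: "upper_triangular (J k)" if "k \<in> {1..n}" for k using jchar_upper[OF Jj[OF that]] .
  have simS: "similar_mat (S k) (J k)" if k: "k \<in> {1..n}" for k
    unfolding Jdef using conj_back[of "U k" "m k" "V k" "S k"] UV[OF k] by blast
  have Ediag: "diagonalizable (S k) \<longleftrightarrow> diagonal_mat (J k)" if k: "k \<in> {1..n}" for k
  proof
    assume "diagonalizable (S k)"
    then have dJ: "diagonalizable (J k)" using similar_diagonalizable[OF simS[OF k]] by simp
    show "diagonal_mat (J k)"
    proof (rule ccontr)
      assume "\<not> diagonal_mat (J k)"
      from jchar_ndw[OF Jc[OF k] Jj[OF k] this] diagonalizable_not_ndw[OF Jc[OF k] dJ] show False by simp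
    qed
  next
    assume "diagonal_mat (J k)"
    then show "diagonalizable (S k)" unfolding diagonalizable_def using simS[OF k] by blast
  qed
  have UVall: "\<forall>i\<in>{1..n}. U i \<in> carrier_mat (m i) (m i) \<and> V i \<in> carrier_mat (m i) (m i)
          \<and> S i \<in> carrier_mat (m i) (m i) \<and> V i * U i = 1\<^sub>m (m i) \<and> U i * V i = 1\<^sub>m (m i)"
    using UV by blast
  from sim_main[OF n1 UVall]
  have QP: "kprod V n * kprod U n = 1\<^sub>m (D m n)" and PQ: "kprod U n * kprod V n = 1\<^sub>m (D m n)"
    and QSP: "kprod V n * ksum S m n * kprod U n = ksum J m n"
    unfolding Jdef[abs_def] by auto
  have Uc: "\<forall>i\<in>{1..n}. U i \<in> carrier_mat (m i) (m i)" and Vc: "\<forall>i\<in>{1..n}. V i \<in> carrier_mat (m i) (m i)"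
    and Sc': "\<forall>i\<in>{1..n}. S i \<in> carrier_mat (m i) (m i)" and Jc': "\<forall>i\<in>{1..n}. J i \<in> carrier_mat (m i) (m i)"
    using UV Jc by blast+
  have P: "kprod U n \<in> carrier_mat (D m n) (D m n)" by (rule kprod_carrier[OF n1 Uc])
  have Q: "kprod V n \<in> carrier_mat (D m n) (D m n)" by (rule kprod_carrier[OF n1 Vc])
  have KS: "ksum S m n \<in> carrier_mat (D m n) (D m n)" by (rule ksum_carrier[OF n1 Sc'])
  have KJ: "ksum J m n \<in> carrier_mat (D m n) (D m n)" by (rule ksum_carrier[OF n1 Jc'])
  have mi: "minv (kprod U n) = kprod V n" and inv: "invertible_mat (kprod U n)"
    using minv_eq[OF P Q PQ QP] by auto
  have part2: "minv (kprod U n) * ksum S m n * kprod U n = ksum J m n" unfolding mi QSP ..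
  have part3: "upper_triangular (ksum J m n)"
    by (rule ksum_upper[OF n1]) (use Jc Ju in blast)
  have Jall: "\<forall>i\<in>{1..n}. J i \<in> carrier_mat (m i) (m i) \<and> jchar (J i) \<and> m i \<ge> 2"
    using Jc Jj mge by blast
  have dKJ: "dim_row (ksum J m n) = D m n" using KJ by (simp add: carrier_matD)
  have part4: "canonical_jordan (ksum J m n) \<longleftrightarrow> (\<forall>k\<in>{2..n}. diagonalizable (S k))"
  proof -
    have "canonical_jordan (ksum J m n) \<longleftrightarrow> jchar (ksum J m n)"
      unfolding canonical_iff dKJ using KJ by simp
    also have "\<dots> \<longleftrightarrow> (\<forall>k\<in>{2..n}. diagonal_mat (J k))" by (rule ksum_jchar[OF n1 Jall])
    also have "\<dots> \<longleftrightarrow> (\<forall>k\<in>{2..n}. diagonalizable (S k))" using Ediag by auto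
    finally show ?thesis .
  qed
  have simK: "similar_mat (ksum S m n) (ksum J m n)"
    unfolding QSP[symmetric] by (rule conj_back[OF P Q KS PQ QP])
  have part5: "diagonalizable (ksum S m n) \<longleftrightarrow> (\<forall>k\<in>{1..n}. diagonalizable (S k))"
  proof
    assume d: "diagonalizable (ksum S m n)"
    show "\<forall>k\<in>{1..n}. diagonalizable (S k)"
    proof (rule ccontr)
      assume "\<not> (\<forall>k\<in>{1..n}. diagonalizable (S k))"
      then obtain k where k: "k \<in> {1..n}" and nd: "\<not> diagonalizable (S k)" by blast
      then have "\<not> diagonal_mat (J k)" using Ediag by blast
      from jchar_ndw[OF Jc[OF k] Jj[OF k] this] have "ndw (J k)" .
      then have "ndw (ksum J m n)"
        by (intro ksum_ndw[OF n1]) (use Jc Ju mge k in blast)+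
      moreover have "diagonalizable (ksum J m n)" using d similar_diagonalizable[OF simK] by simp
      ultimately show False using diagonalizable_not_ndw[OF KJ] by blast
    qed
  next
    assume "\<forall>k\<in>{1..n}. diagonalizable (S k)"
    then have "\<forall>k\<in>{1..n}. J k \<in> carrier_mat (m k) (m k) \<and> diagonal_mat (J k)" using Ediag Jc by blast
    from ksum_diag[OF n1 this] have "diagonal_mat (ksum J m n)" .
    then have "diagonalizable (ksum J m n)" unfolding diagonalizable_def using similar_mat_refl[OF KJ] by blast
    then show "diagonalizable (ksum S m n)" using similar_diagonalizable[OF simK] by simp
  qed
  show ?thesis using inv part2 part3 part4 part5 by blast
qed

end
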